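(* Let $P$ be a finite poset with unique minimal element $x_0$ and $Q$ a non-empty poset ideal of $P$. Then for any field $k$, $\tilde H^i(\Delta((P\uplus Q)\setminus\{x_0^\ast\});k)=0$ for all $i\in\mathbb{Z}$.
   Context: $\Delta(\cdot)$ denotes the order complex (simplicial complex of chains) and $\tilde H^i$ reduced simplicial cohomology. A poset ideal $Q$ of $P$ is a subset with $x\in Q$, $y<x$ implying $y\in Q$. The poset $P\uplus Q$ has underlying set $P\cup Q^\ast$, $Q^\ast=\{x^\ast:x\in Q\}$ a disjoint copy of $Q$, with $\alpha<\beta$ iff either $\alpha,\beta\in P$ and $\alpha<\beta$ in $P$; or $\alpha=x^\ast,\beta=y^\ast$ with $x<y$ in $P$; or $\alpha=x^\ast$ with $x\in Q$, $\beta\in P$ and $x\le\beta$ in $P$. *)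

theory Defs
  imports Main
begin

definition strict :: "('a \<times> 'a) set \<Rightarrow> 'a \<Rightarrow> 'a \<Rightarrow> bool" where
  "strict le x y \<longleftrightarrow> (x, y) \<in> le \<and> x \<noteq> y"

definition minimal_elem :: "'a set \<Rightarrow> ('a \<times> 'a) set \<Rightarrow> 'a \<Rightarrow> bool" where
  "minimal_elem A le x \<longleftrightarrow> x \<in> A \<and> \<not> (\<exists>y\<in>A. strict le y x)"

definition poset_ideal :: "'a set \<Rightarrow> ('a \<times> 'a) set \<Rightarrow> 'a set \<Rightarrow> bool" where
  "poset_ideal A le Q \<longleftrightarrow> Q \<subseteq> A \<and> (\<forall>x\<in>Q. \<forall>y\<in>A. strict le y x \<longrightarrow> y \<in> Q)"

text \<open>The poset P \<uplus> Q: elements Inl x (x in P) and Inr x (the copy x* of x in Q),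
  given by its strict order relation.\<close>
definition uplus_carrier :: "'a set \<Rightarrow> 'a set \<Rightarrow> ('a + 'a) set" where
  "uplus_carrier P Q = Inl ` P \<union> Inr ` Q"

fun uplus_less :: "('a \<times> 'a) set \<Rightarrow> 'a + 'a \<Rightarrow> 'a + 'a \<Rightarrow> bool" where
  "uplus_less le (Inl x) (Inl y) = strict le x y"
| "uplus_less le (Inr x) (Inr y) = strict le x y"
| "uplus_less le (Inr x) (Inl y) = ((x, y) \<in> le)"
| "uplus_less le (Inl x) (Inr y) = False"

text \<open>The empty chain is the (-1)-simplex (augmented complex, for reduced cohomology).\<close>
definition oc_simplex :: "'a set \<Rightarrow> ('a \<Rightarrow> 'a \<Rightarrow> bool) \<Rightarrow> int \<Rightarrow> 'a list \<Rightarrow> bool" where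
  "oc_simplex A lt i \<sigma> \<longleftrightarrow> sorted_wrt lt \<sigma> \<and> set \<sigma> \<subseteq> A \<and> int (length \<sigma>) = i + 1"

definition coboundary :: "('a list \<Rightarrow> 'k::field) \<Rightarrow> 'a list \<Rightarrow> 'k" where
  "coboundary f \<sigma> = (\<Sum>j<length \<sigma>. (-1) ^ j * f (take j \<sigma> @ drop (Suc j) \<sigma>))"

definition is_cocycle :: "'a set \<Rightarrow> ('a \<Rightarrow> 'a \<Rightarrow> bool) \<Rightarrow> int \<Rightarrow> ('a list \<Rightarrow> 'k::field) \<Rightarrow> bool" where
  "is_cocycle A lt i f \<longleftrightarrow> (\<forall>\<sigma>. oc_simplex A lt (i + 1) \<sigma> \<longrightarrow> coboundary f \<sigma> = 0)"

definition is_coboundary :: "'a set \<Rightarrow> ('a \<Rightarrow> 'a \<Rightarrow> bool) \<Rightarrow> int \<Rightarrow> ('a list \<Rightarrow> 'k::field) \<Rightarrow> bool" where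
  "is_coboundary A lt i f \<longleftrightarrow> (\<exists>g. \<forall>\<sigma>. oc_simplex A lt i \<sigma> \<longrightarrow> f \<sigma> = coboundary g \<sigma>)"

text \<open>\<tilde>H^i(\<Delta>(A,lt); k) = 0, i.e. every reduced i-cocycle with coefficients in k is a coboundary.
  The field k is given by the type 'k.\<close>
definition reduced_cohomology_vanishes ::
  "'k::field itself \<Rightarrow> 'a set \<Rightarrow> ('a \<Rightarrow> 'a \<Rightarrow> bool) \<Rightarrow> int \<Rightarrow> bool" where
  "reduced_cohomology_vanishes _ A lt i \<longleftrightarrow>
     (\<forall>f :: 'a list \<Rightarrow> 'k. is_cocycle A lt i f \<longrightarrow> is_coboundary A lt i f)"

end

theory Submission imports Defs begin

definition rem :: "nat \<Rightarrow> 'a list \<Rightarrow> 'a list" where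
  "rem j xs = take j xs @ drop (Suc j) xs"

lemma cob_rem: "coboundary f \<sigma> = (\<Sum>j<length \<sigma>. (-1) ^ j * f (rem j \<sigma>))"
  by (simp add: coboundary_def rem_def)

lemma cob_Nil[simp]: "coboundary f [] = 0"
  by (simp add: coboundary_def)

lemma cob_Cons: "coboundary f (x # xs) = f xs - coboundary (\<lambda>ys. f (x # ys)) xs"
  unfolding coboundary_def length_Cons sum.lessThan_Suc_shift
  by (simp add: sum_negf[symmetric])

lemma cob_diff: "coboundary (\<lambda>\<rho>. f \<rho> - h \<rho>) \<sigma> = coboundary f \<sigma> - coboundary h \<sigma>"
  by (simp add: coboundary_def right_diff_distrib sum_subtractf)

lemma cob_cob: "coboundary (coboundary f) \<sigma> = 0"
proof (induction \<sigma> arbitrary: f)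
  case Nil then show ?case by simp
next
  case (Cons x xs)
  have e: "(\<lambda>ys. coboundary f (x # ys)) = (\<lambda>ys. f ys - coboundary (\<lambda>zs. f (x # zs)) ys)"
    by (simp add: cob_Cons)
  show ?case
    by (simp only: cob_Cons[of "coboundary f"] e cob_diff Cons.IH) simp
qed

lemma cob_cong: "(\<And>j. j < length \<sigma> \<Longrightarrow> f (rem j \<sigma>) = h (rem j \<sigma>)) \<Longrightarrow> coboundary f \<sigma> = coboundary h \<sigma>"
  by (simp add: cob_rem)

lemma set_rem: "set (rem j xs) \<subseteq> set xs"
  unfolding rem_def using set_take_subset set_drop_subset by fastforce

lemma length_rem: "j < length xs \<Longrightarrow> length (rem j xs) = length xs - 1"
  by (simp add: rem_def)

lemma rem_Cons_Suc[simp]: "rem (Suc j) (x # xs) = x # rem j xs"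
  by (simp add: rem_def)

lemma rem_Cons_0[simp]: "rem 0 (x # xs) = xs"
  by (simp add: rem_def)

lemma rem_append: "rem j (\<alpha> @ a # \<beta>) = (if j < length \<alpha> then rem j \<alpha> @ a # \<beta> else if j = length \<alpha> then \<alpha> @ \<beta> else \<alpha> @ a # rem (j - length \<alpha> - 1) \<beta>)"
proof -
  consider "j < length \<alpha>" | "j = length \<alpha>" | d where "j = length \<alpha> + Suc d"
    by (metis add_Suc_right less_imp_Suc_add linorder_neqE_nat)
  then show ?thesis by cases (simp_all add: rem_def)
qed

lemma sum_split_add: "(\<Sum>j<n+(m::nat). F j) = (\<Sum>j<n. F j) + (\<Sum>j<m. F (n + j)::'b::comm_monoid_add)"
  by (induction m arbitrary: F) (simp_all add: add.assoc)

lemma cob_split: "coboundary f (\<alpha> @ a # \<beta>) =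
   (\<Sum>j<length \<alpha>. (-1) ^ j * f (rem j \<alpha> @ a # \<beta>)) + (-1) ^ length \<alpha> * f (\<alpha> @ \<beta>)
   + (\<Sum>j<length \<beta>. (-1) ^ (length \<alpha> + 1 + j) * f (\<alpha> @ a # rem j \<beta>))"
proof -
  have "coboundary f (\<alpha> @ a # \<beta>) = (\<Sum>j<length \<alpha> + Suc (length \<beta>). (-1) ^ j * f (rem j (\<alpha> @ a # \<beta>)))"
    by (simp add: cob_rem)
  also have "\<dots> = (\<Sum>j<length \<alpha>. (-1) ^ j * f (rem j (\<alpha> @ a # \<beta>))) + (\<Sum>j<Suc (length \<beta>). (-1) ^ (length \<alpha> + j) * f (rem (length \<alpha> + j) (\<alpha> @ a # \<beta>)))"
    by (rule sum_split_add)
  also have "(\<Sum>j<length \<alpha>. (-1) ^ j * f (rem j (\<alpha> @ a # \<beta>))) = (\<Sum>j<length \<alpha>. (-1) ^ j * f (rem j \<alpha> @ a # \<beta>))"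
    by (rule sum.cong) (auto simp: rem_append)
  also have "(\<Sum>j<Suc (length \<beta>). (-1) ^ (length \<alpha> + j) * f (rem (length \<alpha> + j) (\<alpha> @ a # \<beta>)))
     = (-1) ^ length \<alpha> * f (\<alpha> @ \<beta>) + (\<Sum>j<length \<beta>. (-1) ^ (length \<alpha> + 1 + j) * f (\<alpha> @ a # rem j \<beta>))"
    unfolding sum.lessThan_Suc_shift by (simp add: rem_append)
  finally show ?thesis by (simp add: add.assoc)
qed

lemma cob_zero[simp]: "coboundary (\<lambda>_. 0) \<sigma> = 0"
  by (simp add: coboundary_def)

lemma cone:
  assumes m: "m \<in> A" and up: "\<forall>x\<in>A. x \<noteq> m \<longrightarrow> lt m x" and nd: "\<forall>x\<in>A. \<not> lt x m"
  shows "reduced_cohomology_vanishes TYPE('k::field) A lt i"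
  unfolding reduced_cohomology_vanishes_def
proof (intro allI impI)
  fix f :: "'a list \<Rightarrow> 'k" assume cf: "is_cocycle A lt i f"
  define g where "g = (\<lambda>\<rho>. if m \<in> set \<rho> then 0 else f (m # \<rho>))"
  show "is_coboundary A lt i f"
    unfolding is_coboundary_def
  proof (intro exI allI impI)
    fix \<sigma> assume s: "oc_simplex A lt i \<sigma>"
    show "f \<sigma> = coboundary g \<sigma>"
    proof (cases "m \<in> set \<sigma>")
      case False
      have "coboundary g \<sigma> = coboundary (\<lambda>\<rho>. f (m # \<rho>)) \<sigma>"
        by (rule cob_cong) (use False set_rem in \<open>fastforce simp: g_def\<close>)
      moreover have "oc_simplex A lt (i + 1) (m # \<sigma>)"
        using s False up m unfolding oc_simplex_def by auto
      then have "coboundary f (m # \<sigma>) = 0" using cf unfolding is_cocycle_def by blast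
      ultimately show ?thesis by (simp add: cob_Cons)
    next
      case True
      then obtain \<alpha> \<beta> where sp: "\<sigma> = \<alpha> @ m # \<beta>" by (meson split_list)
      have "\<alpha> = []"
      proof (cases \<alpha>)
        case (Cons x xs)
        then have "lt x m" "x \<in> A" using s sp unfolding oc_simplex_def by (auto simp: sorted_wrt_append)
        then show ?thesis using nd by blast
      qed
      then have sm: "\<sigma> = m # \<beta>" using sp by simp
      have "m \<notin> set \<beta>" using s sm nd m unfolding oc_simplex_def by auto
      then show ?thesis using sm by (simp add: cob_Cons g_def)
    qed
  qed
qed

lemma neg1_sq: "((-1::'k::field) ^ k) * (-1) ^ k = 1"
  by (metis power_add power_minus1_even mult_2 even_add)

lemma beat:
  assumes aA: "a \<in> A" and bA: "b \<in> A" and ab: "lt a b"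
   and H2: "\<forall>c\<in>A. lt a c \<longrightarrow> c = b \<or> lt b c"
   and tr: "\<forall>x\<in>A. \<forall>y\<in>A. \<forall>z\<in>A. lt x y \<longrightarrow> lt y z \<longrightarrow> lt x z"
   and irr: "\<forall>x\<in>A. \<not> lt x x"
   and IH: "reduced_cohomology_vanishes TYPE('k::field) (A - {a}) lt i"
  shows "reduced_cohomology_vanishes TYPE('k) A lt i"
  unfolding reduced_cohomology_vanishes_def
proof (intro allI impI)
  fix \<phi> :: "'a list \<Rightarrow> 'k" assume c\<phi>: "is_cocycle A lt i \<phi>"
  have "is_cocycle (A - {a}) lt i \<phi>"
    using c\<phi> unfolding is_cocycle_def oc_simplex_def by blast
  then obtain \<psi> where h\<psi>: "\<And>\<sigma>. oc_simplex (A - {a}) lt i \<sigma> \<Longrightarrow> \<phi> \<sigma> = coboundary \<psi> \<sigma>"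
    using IH unfolding reduced_cohomology_vanishes_def is_coboundary_def by blast
  define \<psi>' where "\<psi>' = (\<lambda>\<rho>. if a \<in> set \<rho> then 0 else \<psi> \<rho>)"
  define \<phi>' where "\<phi>' = (\<lambda>\<rho>. \<phi> \<rho> - coboundary \<psi>' \<rho>)"
  define g where "g = (\<lambda>\<rho>. if a \<in> set \<rho> then (if b \<in> set \<rho> then 0 else
     (-1) ^ (length (takeWhile (\<lambda>x. x \<noteq> a) \<rho>) + 1) *
       \<phi>' (takeWhile (\<lambda>x. x \<noteq> a) \<rho> @ a # b # tl (dropWhile (\<lambda>x. x \<noteq> a) \<rho>))) else \<psi> \<rho>)"
  have g_eq: "g (\<alpha> @ a # \<beta>) = (-1) ^ (length \<alpha> + 1) * \<phi>' (\<alpha> @ a # b # \<beta>)"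
    if "a \<notin> set \<alpha>" "b \<notin> set \<alpha>" "b \<notin> set \<beta>" "b \<noteq> a" for \<alpha> \<beta>
    using that by (simp add: g_def takeWhile_append dropWhile_append)
  have g_b: "g (\<alpha> @ a # \<beta>) = 0" if "b \<in> set \<beta>" for \<alpha> \<beta>
    using that by (simp add: g_def)
  have g_na: "g \<rho> = \<psi> \<rho>" if "a \<notin> set \<rho>" for \<rho>
    using that by (simp add: g_def)
  have F2: "\<phi>' \<rho> = 0" if "oc_simplex (A - {a}) lt i \<rho>" for \<rho>
  proof -
    have na: "a \<notin> set \<rho>" using that unfolding oc_simplex_def by auto
    have "coboundary \<psi>' \<rho> = coboundary \<psi> \<rho>"
      by (rule cob_cong) (use na set_rem in \<open>fastforce simp: \<psi>'_def\<close>)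
    then show ?thesis using h\<psi>[OF that] by (simp add: \<phi>'_def)
  qed
  have F3: "coboundary \<phi>' \<tau> = 0" if "oc_simplex A lt (i + 1) \<tau>" for \<tau>
    using c\<phi> that unfolding \<phi>'_def cob_diff cob_cob is_cocycle_def by simp
  have D\<psi>': "coboundary \<psi>' (\<alpha> @ a # \<beta>) = (-1) ^ length \<alpha> * \<psi> (\<alpha> @ \<beta>)"
    if "a \<notin> set \<alpha>" "a \<notin> set \<beta>" for \<alpha> \<beta>
    using that by (simp add: cob_split \<psi>'_def)
  have ba: "b \<noteq> a" using ab irr aA by blast
  show "is_coboundary A lt i \<phi>"
    unfolding is_coboundary_def
  proof (intro exI allI impI)
    fix \<sigma> assume s: "oc_simplex A lt i \<sigma>"
    show "\<phi> \<sigma> = coboundary g \<sigma>"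
    proof (cases "a \<in> set \<sigma>")
      case False
      have "coboundary g \<sigma> = coboundary \<psi> \<sigma>"
      proof (rule cob_cong)
        fix j show "g (rem j \<sigma>) = \<psi> (rem j \<sigma>)"
          using False set_rem[of j \<sigma>] g_na by blast
      qed
      moreover have "oc_simplex (A - {a}) lt i \<sigma>" using s False unfolding oc_simplex_def by auto
      ultimately show ?thesis using h\<psi>[of \<sigma>] by simp
    next
      case True
      then obtain \<alpha> \<beta> where sp: "\<sigma> = \<alpha> @ a # \<beta>" by (meson split_list)
      define k where "k = length \<alpha>"
      have sa: "sorted_wrt lt \<alpha>" and sb: "sorted_wrt lt \<beta>" and xa: "\<forall>x\<in>set \<alpha>. lt x a"
        and ay: "\<forall>y\<in>set \<beta>. lt a y" and xy: "\<forall>x\<in>set \<alpha>. \<forall>y\<in>set \<beta>. lt x y"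
        and Aa: "set \<alpha> \<subseteq> A" and Ab: "set \<beta> \<subseteq> A" and len: "int (length \<alpha> + length \<beta>) = i"
        using s sp unfolding oc_simplex_def by (auto simp: sorted_wrt_append)
      have naa: "a \<notin> set \<alpha>" using xa irr aA by blast
      have nab: "a \<notin> set \<beta>" using ay irr aA by blast
      have nba: "b \<notin> set \<alpha>"
      proof
        assume "b \<in> set \<alpha>"
        then have "lt b a" using xa by blast
        then have "lt a a" using tr ab aA bA by blast
        then show False using irr aA by blast
      qed
      have phis: "\<phi> \<sigma> = \<phi>' \<sigma> + (-1) ^ k * \<psi> (\<alpha> @ \<beta>)"
        using D\<psi>'[OF naa nab] sp by (simp add: \<phi>'_def k_def)
      show ?thesis
      proof (cases "b \<in> set \<beta>")
        case False
        have by': "\<forall>y\<in>set \<beta>. lt b y" using H2 ay Ab False by blast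
        have xb: "\<forall>x\<in>set \<alpha>. lt x b"
        proof
          fix x assume "x \<in> set \<alpha>"
          then have "lt x a" "x \<in> A" using xa Aa by auto
          then show "lt x b" using tr ab aA bA by blast
        qed
        have tau: "oc_simplex A lt (i + 1) (\<alpha> @ a # b # \<beta>)"
          unfolding oc_simplex_def using sa sb xa ay xy Aa Ab len by' ab aA bA xb
          by (simp add: sorted_wrt_append)
        have "oc_simplex (A - {a}) lt i (\<alpha> @ b # \<beta>)"
          unfolding oc_simplex_def using sa sb xa ay xy Aa Ab len by' ab aA bA naa nab ba xb
          by (auto simp add: sorted_wrt_append)
        then have z: "\<phi>' (\<alpha> @ b # \<beta>) = 0" by (rule F2)
        define X where "X j = \<phi>' (rem j \<alpha> @ a # b # \<beta>)" for j
        define Y where "Y j = \<phi>' (\<alpha> @ a # b # rem j \<beta>)" for j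
        define S1 where "S1 = (\<Sum>j<k. (-1) ^ j * X j)"
        define T where "T = (\<Sum>j<length \<beta>. (-1) ^ j * Y j)"
        have "coboundary \<phi>' (\<alpha> @ a # (b # \<beta>)) = S1 + (-1) ^ (k + 1) * \<phi>' \<sigma>
             + (\<Sum>j<length \<beta>. (-1) ^ (k + 1 + Suc j) * Y j)"
          unfolding cob_split length_Cons sum.lessThan_Suc_shift
          by (simp add: z S1_def X_def Y_def k_def sp)
        also have "(\<Sum>j<length \<beta>. (-1) ^ (k + 1 + Suc j) * Y j) = (-1) ^ k * T"
          by (simp add: T_def sum_distrib_left power_add mult.assoc)
        finally have E1: "S1 - (-1) ^ k * \<phi>' \<sigma> + (-1) ^ k * T = 0"
          using F3[OF tau] by simp
        have ps: "\<phi>' \<sigma> = (-1) ^ k * S1 + T"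
        proof -
          have "(-1) ^ k * \<phi>' \<sigma> = S1 + (-1) ^ k * T" using E1 by (simp add: algebra_simps)
          then have "(-1) ^ k * ((-1) ^ k * \<phi>' \<sigma>) = (-1) ^ k * S1 + (-1) ^ k * ((-1) ^ k * T)"
            by (simp add: algebra_simps)
          then show ?thesis by (simp add: mult.assoc[symmetric] neg1_sq)
        qed
        have c1: "(\<Sum>j<k. (-1) ^ j * g (rem j \<alpha> @ a # \<beta>)) = (-1) ^ k * S1"
          unfolding S1_def sum_distrib_left
        proof (rule sum.cong)
          fix j assume "j \<in> {..<k}"
          then have jk: "j < k" by simp
          have "g (rem j \<alpha> @ a # \<beta>) = (-1) ^ (length (rem j \<alpha>) + 1) * X j"
            unfolding X_def using set_rem[of j \<alpha>] naa nba False ba by (intro g_eq) auto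
          also have "length (rem j \<alpha>) + 1 = k" using jk length_rem[of j \<alpha>] k_def by simp
          finally show "(-1) ^ j * g (rem j \<alpha> @ a # \<beta>) = (-1) ^ k * ((-1) ^ j * X j)"
            by simp
        qed simp
        have c3: "(\<Sum>j<length \<beta>. (-1) ^ (k + 1 + j) * g (\<alpha> @ a # rem j \<beta>)) = T"
          unfolding T_def
        proof (rule sum.cong)
          fix j
          have "g (\<alpha> @ a # rem j \<beta>) = (-1) ^ (k + 1) * Y j"
            unfolding Y_def k_def using set_rem[of j \<beta>] naa nba False ba by (intro g_eq) auto
          then show "(-1) ^ (k + 1 + j) * g (\<alpha> @ a # rem j \<beta>) = (-1) ^ j * Y j"
            by (simp add: power_add mult.assoc[symmetric] neg1_sq)
        qed simp
        have "coboundary g \<sigma> = (-1) ^ k * S1 + (-1) ^ k * \<psi> (\<alpha> @ \<beta>) + T"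
          unfolding sp cob_split k_def[symmetric] c1 c3 using g_na naa nab by simp
        then show ?thesis using phis ps by simp
      next
        case True
        obtain \<gamma> where bg: "\<beta> = b # \<gamma>"
        proof (cases \<beta>)
          case Nil then show ?thesis using True by simp
        next
          case (Cons y0 \<beta>')
          have "y0 = b"
          proof (rule ccontr)
            assume ne: "y0 \<noteq> b"
            then have "b \<in> set \<beta>'" using True Cons by simp
            then have "lt y0 b" using sb Cons by simp
            moreover have "lt b y0" using H2 ay Ab Cons ne by auto
            moreover have "y0 \<in> A" using Ab Cons by simp
            ultimately have "lt y0 y0" using tr bA by blast
            then show False using irr \<open>y0 \<in> A\<close> by blast
          qed
          then show ?thesis using Cons that by simp
        qed
        have nbg: "b \<notin> set \<gamma>"
        proof
          assume "b \<in> set \<gamma>" then have "lt b b" using sb bg by simp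
          then show False using irr bA by blast
        qed
        have "coboundary g \<sigma> = (-1) ^ k * \<psi> (\<alpha> @ b # \<gamma>) + (-1) ^ (k + 1) * g (\<alpha> @ a # \<gamma>)"
          unfolding sp bg cob_split length_Cons sum.lessThan_Suc_shift
          using g_b g_na naa nab bg by (simp add: k_def)
        also have "g (\<alpha> @ a # \<gamma>) = (-1) ^ (k + 1) * \<phi>' \<sigma>"
          using g_eq[OF naa nba nbg ba] by (simp add: sp bg k_def)
        finally show ?thesis using phis bg
          by (simp add: mult.assoc[symmetric] neg1_sq)
      qed
    qed
  qed
qed

lemma ex_min:
  assumes "finite S" "S \<noteq> {}" "\<forall>x\<in>S. \<not> R x x"
    "\<forall>x\<in>S. \<forall>y\<in>S. \<forall>z\<in>S. R x y \<longrightarrow> R y z \<longrightarrow> R x z"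
  shows "\<exists>z\<in>S. \<forall>w\<in>S. \<not> R w z"
  using assms
proof (induction S rule: finite_ne_induct)
  case (singleton x) then show ?case by blast
next
  case (insert x F)
  have p1: "\<forall>a\<in>F. \<not> R a a" using insert.prems(1) by blast
  have p2: "\<forall>a\<in>F. \<forall>b\<in>F. \<forall>c\<in>F. R a b \<longrightarrow> R b c \<longrightarrow> R a c"
  proof (intro ballI impI)
    fix a b c assume "a \<in> F" "b \<in> F" "c \<in> F" "R a b" "R b c"
    then show "R a c" using insert.prems(2)[rule_format, of a b c] by blast
  qed
  obtain z where z: "z \<in> F" "\<forall>w\<in>F. \<not> R w z" using insert.IH[OF p1 p2] by blast
  show ?case
  proof (cases "R x z")
    case True
    have "\<forall>w\<in>insert x F. \<not> R w x"
    proof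
      fix w assume w: "w \<in> insert x F"
      show "\<not> R w x"
      proof
        assume wx: "R w x"
        have "R w z" using insert.prems(2)[rule_format, of w x z] True w z(1) wx by blast
        then show False
        proof (cases "w = x")
          case True then show False using wx insert.prems(1) by blast
        next
          case False then show False using w z(2) \<open>R w z\<close> by blast
        qed
      qed
    qed
    then show ?thesis by blast
  next
    case False
    have "\<forall>w\<in>insert x F. \<not> R w z" using z(2) False by blast
    then show ?thesis using z(1) by blast
  qed
qed

lemma uplus_trans:
  assumes refl: "\<forall>x\<in>P. (x, x) \<in> le"
    and antis: "\<forall>x\<in>P. \<forall>y\<in>P. (x, y) \<in> le \<longrightarrow> (y, x) \<in> le \<longrightarrow> x = y"
    and tr: "\<forall>x\<in>P. \<forall>y\<in>P. \<forall>z\<in>P. (x, y) \<in> le \<longrightarrow> (y, z) \<in> le \<longrightarrow> (x, z) \<in> le"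
    and u: "u \<in> Inl ` P \<union> Inr ` P" and v: "v \<in> Inl ` P \<union> Inr ` P" and w: "w \<in> Inl ` P \<union> Inr ` P"
    and uv: "uplus_less le u v" and vw: "uplus_less le v w"
  shows "uplus_less le u w"
proof -
  obtain x where x: "x \<in> P" "u = Inl x \<or> u = Inr x" using u by auto
  obtain y where y: "y \<in> P" "v = Inl y \<or> v = Inr y" using v by auto
  obtain z where z: "z \<in> P" "w = Inl z \<or> w = Inr z" using w by auto
  have xy: "(x, y) \<in> le" and yz: "(y, z) \<in> le"
    using uv vw x y z by (auto simp: strict_def)
  have xz: "(x, z) \<in> le" using tr xy yz x y z by blast
  have ne: "x \<noteq> z" if "strict le x y \<or> strict le y z"
    using that antis xy yz xz tr x y z unfolding strict_def by metis
  show ?thesis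
    using x(2) y(2) z(2) uv vw xz ne by (auto simp: strict_def)
qed

theorem lemma6p6:
  fixes P Q :: "'a set" and le :: "('a \<times> 'a) set" and x0 :: 'a
  assumes "finite P"
    and "partial_order_on P le"
    and "minimal_elem P le x0"
    and "\<forall>z. minimal_elem P le z \<longrightarrow> z = x0"
    and "poset_ideal P le Q"
    and "Q \<noteq> {}"
  shows "\<forall>i :: int. reduced_cohomology_vanishes TYPE('k::field)
           (uplus_carrier P Q - {Inr x0}) (uplus_less le) i"
proof -
  note fin = assms(1)
  have refl: "\<forall>x\<in>P. (x, x) \<in> le"
    and antis: "\<forall>x\<in>P. \<forall>y\<in>P. (x, y) \<in> le \<longrightarrow> (y, x) \<in> le \<longrightarrow> x = y"
    and tr: "\<forall>x\<in>P. \<forall>y\<in>P. \<forall>z\<in>P. (x, y) \<in> le \<longrightarrow> (y, z) \<in> le \<longrightarrow> (x, z) \<in> le"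
    using assms(2) unfolding partial_order_on_def preorder_on_def refl_on_def antisym_on_def trans_on_def
    by blast+
  have str: "\<forall>x\<in>P. \<forall>y\<in>P. \<forall>z\<in>P. strict le x y \<longrightarrow> strict le y z \<longrightarrow> strict le x z"
    using tr antis unfolding strict_def by metis
  have sirr: "\<forall>x. \<not> strict le x x" by (simp add: strict_def)
  have x0P: "x0 \<in> P" and x0min: "\<forall>y\<in>P. \<not> strict le y x0"
    using assms(3) unfolding minimal_elem_def by auto
  have min0: "(x0, y) \<in> le" if yP: "y \<in> P" for y
  proof -
    define S where "S = {z\<in>P. (z, y) \<in> le}"
    have "finite S" "S \<noteq> {}" using fin yP refl unfolding S_def by auto
    moreover have "\<forall>x\<in>S. \<forall>y\<in>S. \<forall>z\<in>S. strict le x y \<longrightarrow> strict le y z \<longrightarrow> strict le x z"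
      using str unfolding S_def by blast
    ultimately obtain z where z: "z \<in> S" "\<forall>w\<in>S. \<not> strict le w z"
      using ex_min[of S "strict le"] sirr by blast
    have "minimal_elem P le z"
      unfolding minimal_elem_def
    proof
      show "z \<in> P" using z unfolding S_def by auto
      show "\<not> (\<exists>w\<in>P. strict le w z)"
      proof
        assume "\<exists>w\<in>P. strict le w z"
        then obtain w where w: "w \<in> P" "strict le w z" by blast
        then have "(w, y) \<in> le" using tr z(1) yP unfolding S_def strict_def by blast
        then show False using w z unfolding S_def by blast
      qed
    qed
    then have "z = x0" using assms(4) by blast
    then show ?thesis using z unfolding S_def by auto
  qed
  have QP: "Q \<subseteq> P" using assms(5) unfolding poset_ideal_def by auto
  have x0Q: "x0 \<in> Q"
  proof -
    obtain q where q: "q \<in> Q" using assms(6) by blast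
    show ?thesis
    proof (cases "q = x0")
      case False
      then have "strict le x0 q" using min0 q QP unfolding strict_def by auto
      then show ?thesis using assms(5) q x0P unfolding poset_ideal_def by blast
    qed (use q in simp)
  qed
  have ceq: "uplus_carrier P Q - {Inr x0} = Inl ` P \<union> Inr ` (Q - {x0})"
    unfolding uplus_carrier_def by auto
  have main: "\<forall>i. reduced_cohomology_vanishes TYPE('k) (Inl ` P \<union> Inr ` S) (uplus_less le) i"
    if "finite S" "S \<subseteq> Q - {x0}" for S
    using that
  proof (induction "card S" arbitrary: S rule: less_induct)
    case less
    show ?case
    proof (cases "S = {}")
      case True
      show ?thesis unfolding True
      proof
        fix i
        show "reduced_cohomology_vanishes TYPE('k) (Inl ` P \<union> Inr ` {}) (uplus_less le) i"
          by (rule cone[where m = "Inl x0"]) (use x0P min0 x0min in \<open>auto simp: strict_def\<close>)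
      qed
    next
      case False
      have SP: "S \<subseteq> P" using less.prems QP by auto
      obtain x where x: "x \<in> S" "\<forall>w\<in>S. \<not> strict le x w"
        using ex_min[of S "\<lambda>u v. strict le v u"] False less.prems(1) sirr str SP
        by (smt (verit) subsetD)
      have xP: "x \<in> P" using x SP by auto
      have IH: "\<forall>i. reduced_cohomology_vanishes TYPE('k) (Inl ` P \<union> Inr ` (S - {x})) (uplus_less le) i"
      proof -
        have "card (S - {x}) < card S" by (rule card_Diff1_less[OF less.prems(1) x(1)])
        moreover have "finite (S - {x})" using less.prems(1) by blast
        moreover have "S - {x} \<subseteq> Q - {x0}" using less.prems(2) by blast
        ultimately show ?thesis using less.hyps by blast
      qed
      have deq: "(Inl ` P \<union> Inr ` S) - {Inr x} = Inl ` P \<union> Inr ` (S - {x})" by auto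
      show ?thesis
      proof
        fix i
        show "reduced_cohomology_vanishes TYPE('k) (Inl ` P \<union> Inr ` S) (uplus_less le) i"
        proof (rule beat[where a = "Inr x" and b = "Inl x"])
          show "Inr x \<in> Inl ` P \<union> Inr ` S" using x by auto
          show "Inl x \<in> Inl ` P \<union> Inr ` S" using xP by auto
          show "uplus_less le (Inr x) (Inl x)" using refl xP by simp
          show "\<forall>c\<in>Inl ` P \<union> Inr ` S. uplus_less le (Inr x) c \<longrightarrow> c = Inl x \<or> uplus_less le (Inl x) c"
            using x by (auto simp: strict_def)
          show "\<forall>u\<in>Inl ` P \<union> Inr ` S. \<forall>v\<in>Inl ` P \<union> Inr ` S. \<forall>w\<in>Inl ` P \<union> Inr ` S.
              uplus_less le u v \<longrightarrow> uplus_less le v w \<longrightarrow> uplus_less le u w"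
          proof (intro ballI impI)
            fix u v w assume "u \<in> Inl ` P \<union> Inr ` S" "v \<in> Inl ` P \<union> Inr ` S" "w \<in> Inl ` P \<union> Inr ` S"
              "uplus_less le u v" "uplus_less le v w"
            then show "uplus_less le u w"
              using uplus_trans[OF refl antis tr, of u v w] SP by blast
          qed
          show "\<forall>u\<in>Inl ` P \<union> Inr ` S. \<not> uplus_less le u u"
            by (auto simp: strict_def)
          show "reduced_cohomology_vanishes TYPE('k) (Inl ` P \<union> Inr ` S - {Inr x}) (uplus_less le) i"
            unfolding deq using IH by blast
        qed
      qed
    qed
  qed
  have "finite (Q - {x0})" using fin QP finite_subset by blast
  then show ?thesis unfolding ceq using main by blast
qed

end
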